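(* Let $(A_i,\omega_i)$, $i=1,2$, be baric algebras over $K$ and let $I$ be a two-sided ideal of $A_1\bowtie A_2$ such that $I_1\neq A_1$. Then $I_1$ is a two-sided ideal of $A_1$ if and only if $I_2\subseteq\operatorname{Ker}\omega_2$.
   Context: A baric algebra over a field $K$ is a pair $(A,\omega)$ where $A$ is a (not necessarily associative) $K$-algebra and $\omega:A\to K$ is a nonzero $K$-algebra homomorphism. For baric algebras $(A_1,\omega_1),(A_2,\omega_2)$, $A_1\bowtie A_2$ denotes the vector space $A_1\oplus A_2$ with product $(a_1,a_2)(b_1,b_2)=(a_1b_1+\omega_2(b_2)a_1,\ a_2b_2+\omega_1(b_1)a_2)$. For a subset $I\subseteq A_1\bowtie A_2$, $I_1=\{a_1\in A_1:\exists a_2\in A_2,\ (a_1,a_2)\in I\}$ and $I_2=\{a_2\in A_2:\exists a_1\in A_1,\ (a_1,a_2)\in I\}$ are its coordinate projections. *)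

theory Defs
  imports Main "HOL.Vector_Spaces" "HOL-Library.Product_Plus"
begin

text \<open>A (not necessarily associative) algebra over a field K: the whole type 'a
  is the underlying K-vector space (scalar multiplication sc), with a bilinear product m.\<close>
definition k_algebra :: "('k::field \<Rightarrow> 'a::ab_group_add \<Rightarrow> 'a) \<Rightarrow> ('a \<Rightarrow> 'a \<Rightarrow> 'a) \<Rightarrow> bool" where
  "k_algebra sc m \<longleftrightarrow> vector_space sc
     \<and> (\<forall>x y z. m (x + y) z = m x z + m y z)
     \<and> (\<forall>x y z. m x (y + z) = m x y + m x z)
     \<and> (\<forall>c x y. m (sc c x) y = sc c (m x y))
     \<and> (\<forall>c x y. m x (sc c y) = sc c (m x y))"

definition baric_algebra :: "('k::field \<Rightarrow> 'a::ab_group_add \<Rightarrow> 'a) \<Rightarrow> ('a \<Rightarrow> 'a \<Rightarrow> 'a) \<Rightarrow> ('a \<Rightarrow> 'k) \<Rightarrow> bool" where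
  "baric_algebra sc m w \<longleftrightarrow> k_algebra sc m
     \<and> (\<forall>x y. w (x + y) = w x + w y)
     \<and> (\<forall>c x. w (sc c x) = c * w x)
     \<and> (\<forall>x y. w (m x y) = w x * w y)
     \<and> (\<exists>x. w x \<noteq> 0)"

definition two_sided_ideal :: "('k::field \<Rightarrow> 'a::ab_group_add \<Rightarrow> 'a) \<Rightarrow> ('a \<Rightarrow> 'a \<Rightarrow> 'a) \<Rightarrow> 'a set \<Rightarrow> bool" where
  "two_sided_ideal sc m I \<longleftrightarrow> 0 \<in> I
     \<and> (\<forall>x\<in>I. \<forall>y\<in>I. x + y \<in> I)
     \<and> (\<forall>c. \<forall>x\<in>I. sc c x \<in> I)
     \<and> (\<forall>a. \<forall>x\<in>I. m a x \<in> I \<and> m x a \<in> I)"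

definition prod_scale :: "('k \<Rightarrow> 'a \<Rightarrow> 'a) \<Rightarrow> ('k \<Rightarrow> 'b \<Rightarrow> 'b) \<Rightarrow> 'k \<Rightarrow> 'a \<times> 'b \<Rightarrow> 'a \<times> 'b" where
  "prod_scale sc1 sc2 c p = (sc1 c (fst p), sc2 c (snd p))"

definition bowtie_mult ::
  "('k::field \<Rightarrow> 'a::ab_group_add \<Rightarrow> 'a) \<Rightarrow> ('a \<Rightarrow> 'a \<Rightarrow> 'a) \<Rightarrow> ('a \<Rightarrow> 'k) \<Rightarrow>
   ('k \<Rightarrow> 'b::ab_group_add \<Rightarrow> 'b) \<Rightarrow> ('b \<Rightarrow> 'b \<Rightarrow> 'b) \<Rightarrow> ('b \<Rightarrow> 'k) \<Rightarrow>
   'a \<times> 'b \<Rightarrow> 'a \<times> 'b \<Rightarrow> 'a \<times> 'b" where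
  "bowtie_mult sc1 m1 w1 sc2 m2 w2 p q =
     (m1 (fst p) (fst q) + sc1 (w2 (snd q)) (fst p),
      m2 (snd p) (snd q) + sc2 (w1 (fst q)) (snd p))"

end

theory Submission
  imports Defs
begin

theorem proposition5p2:
  fixes sc1 :: "'k::field \<Rightarrow> 'a::ab_group_add \<Rightarrow> 'a" and m1 :: "'a \<Rightarrow> 'a \<Rightarrow> 'a" and w1 :: "'a \<Rightarrow> 'k"
    and sc2 :: "'k \<Rightarrow> 'b::ab_group_add \<Rightarrow> 'b" and m2 :: "'b \<Rightarrow> 'b \<Rightarrow> 'b" and w2 :: "'b \<Rightarrow> 'k"
    and I :: "('a \<times> 'b) set"
  assumes "baric_algebra sc1 m1 w1"
    and "baric_algebra sc2 m2 w2"
    and "two_sided_ideal (prod_scale sc1 sc2) (bowtie_mult sc1 m1 w1 sc2 m2 w2) I"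
    and "fst ` I \<noteq> UNIV"
  shows "two_sided_ideal sc1 m1 (fst ` I) \<longleftrightarrow> snd ` I \<subseteq> {x. w2 x = 0}"
proof -
  have vs: "vector_space sc1" using assms(1) unfolding baric_algebra_def k_algebra_def by blast
  have md: "module sc1" using vs by (simp add: vector_space_def module_def)
  have w2add: "\<And>x y. w2 (x + y) = w2 x + w2 y" using assms(2) unfolding baric_algebra_def by blast
  have w20: "w2 0 = 0"
  proof -
    have "w2 0 + w2 0 = w2 0 + 0" using w2add[of 0 0] by simp
    thus ?thesis by (rule add_left_imp_eq)
  qed
  have I0: "0 \<in> I" and Iadd: "\<And>x y. x \<in> I \<Longrightarrow> y \<in> I \<Longrightarrow> x + y \<in> I"
    and Isc: "\<And>c x. x \<in> I \<Longrightarrow> prod_scale sc1 sc2 c x \<in> I"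
    and Im: "\<And>a x. x \<in> I \<Longrightarrow> bowtie_mult sc1 m1 w1 sc2 m2 w2 a x \<in> I \<and> bowtie_mult sc1 m1 w1 sc2 m2 w2 x a \<in> I"
    using assms(3) unfolding two_sided_ideal_def by blast+
  have F0: "0 \<in> fst ` I" using I0 by force
  have Fadd: "\<And>x y. x \<in> fst ` I \<Longrightarrow> y \<in> fst ` I \<Longrightarrow> x + y \<in> fst ` I"
  proof -
    fix x y assume "x \<in> fst ` I" "y \<in> fst ` I"
    then obtain p q where "p \<in> I" "q \<in> I" "x = fst p" "y = fst q" by blast
    then have e: "fst (p + q) = x + y" by simp
    show "x + y \<in> fst ` I" by (rule image_eqI[where f=fst, OF e[symmetric] Iadd[OF \<open>p \<in> I\<close> \<open>q \<in> I\<close>]])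
  qed
  have Fsc: "\<And>c x. x \<in> fst ` I \<Longrightarrow> sc1 c x \<in> fst ` I"
  proof -
    fix c x assume "x \<in> fst ` I"
    then obtain p where "p \<in> I" "x = fst p" by blast
    moreover have e: "fst (prod_scale sc1 sc2 c p) = sc1 c x" using \<open>x = fst p\<close> by (simp add: prod_scale_def)
    ultimately show "sc1 c x \<in> fst ` I" by (intro image_eqI[where f=fst, OF e[symmetric]] Isc)
  qed
  have Fneg: "\<And>x. x \<in> fst ` I \<Longrightarrow> - x \<in> fst ` I"
  proof -
    fix x assume "x \<in> fst ` I"
    hence "sc1 (-1) x \<in> fst ` I" by (rule Fsc)
    moreover have "sc1 (-1) x = - x" using module.scale_minus_left[OF md, of 1 x] module.scale_one[OF md, of x] by simp
    ultimately show "- x \<in> fst ` I" by simp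
  qed
  have Fright: "\<And>a x. x \<in> fst ` I \<Longrightarrow> m1 x a \<in> fst ` I"
  proof -
    fix a x assume "x \<in> fst ` I"
    then obtain p where p: "p \<in> I" "x = fst p" by blast
    have "bowtie_mult sc1 m1 w1 sc2 m2 w2 p (a, 0) \<in> I" using Im p by blast
    moreover have e: "fst (bowtie_mult sc1 m1 w1 sc2 m2 w2 p (a, 0)) = m1 x a"
      using p by (simp add: bowtie_mult_def w20 module.scale_zero_left[OF md])
    ultimately show "m1 x a \<in> fst ` I" by (intro image_eqI[where f=fst, OF e[symmetric]])
  qed
  have Fleft: "\<And>a p. p \<in> I \<Longrightarrow> m1 a (fst p) + sc1 (w2 (snd p)) a \<in> fst ` I"
  proof -
    fix a p assume p: "p \<in> I"
    have "bowtie_mult sc1 m1 w1 sc2 m2 w2 (a, 0) p \<in> I" using Im p by blast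
    moreover have e: "fst (bowtie_mult sc1 m1 w1 sc2 m2 w2 (a, 0) p) = m1 a (fst p) + sc1 (w2 (snd p)) a"
      by (simp add: bowtie_mult_def)
    ultimately show "m1 a (fst p) + sc1 (w2 (snd p)) a \<in> fst ` I" by (intro image_eqI[where f=fst, OF e[symmetric]])
  qed
  show ?thesis
  proof
    assume id: "two_sided_ideal sc1 m1 (fst ` I)"
    show "snd ` I \<subseteq> {x. w2 x = 0}"
    proof (rule ccontr)
      assume "\<not> ?thesis"
      then obtain p where p: "p \<in> I" "w2 (snd p) \<noteq> 0" by auto
      have "\<And>a. a \<in> fst ` I"
      proof -
        fix a
        have h1: "m1 a (fst p) \<in> fst ` I" using id p unfolding two_sided_ideal_def by blast
        have "m1 a (fst p) + sc1 (w2 (snd p)) a \<in> fst ` I" using Fleft p by blast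
        hence "- m1 a (fst p) + (m1 a (fst p) + sc1 (w2 (snd p)) a) \<in> fst ` I"
          by (rule Fadd[OF Fneg[OF h1]])
        moreover have "- m1 a (fst p) + (m1 a (fst p) + sc1 (w2 (snd p)) a) = sc1 (w2 (snd p)) a"
          by (simp add: add.assoc[symmetric])
        ultimately have "sc1 (w2 (snd p)) a \<in> fst ` I" by simp
        hence "sc1 (inverse (w2 (snd p))) (sc1 (w2 (snd p)) a) \<in> fst ` I" using Fsc by blast
        thus "a \<in> fst ` I" using p(2)
          by (simp add: module.scale_scale[OF md] module.scale_one[OF md])
      qed
      thus False using assms(4) by blast
    qed
  next
    assume sub: "snd ` I \<subseteq> {x. w2 x = 0}"
    have "\<And>a x. x \<in> fst ` I \<Longrightarrow> m1 a x \<in> fst ` I"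
    proof -
      fix a x assume "x \<in> fst ` I"
      then obtain p where p: "p \<in> I" "x = fst p" by blast
      have "w2 (snd p) = 0" using sub p by auto
      then show "m1 a x \<in> fst ` I" using Fleft[OF p(1), of a] p
        by (simp add: module.scale_zero_left[OF md])
    qed
    then show "two_sided_ideal sc1 m1 (fst ` I)"
      unfolding two_sided_ideal_def using F0 Fadd Fsc Fright by auto
  qed
qed

end
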